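(* Let $h,n,m\in\mathbb{N}$, and let $q_1,\ldots,q_h$ be distinct primes with $q_j\nmid mn$ for all $j$. For each $j$ and each $i\in\{1,\dots,h\}$ let $s_{i,j}\subseteq\{1,\ldots,q_j-1\}$, with $s_{i_1,j}\cap s_{i_2,j}=\emptyset$ for all $i_1\ne i_2$ (the sets $s_{i,j}$ may be empty). Let $S_{i,j}=\sum_{a\in s_{i,j}}e\big(\frac{na}{mq_j}\big)$. Suppose that $s_{i,i}\ne\emptyset$ for every $i$. Then $\det\big([S_{i,j}]_{1\le i,j\le h}\big)\ne0$.
   Context: $e(x):=e^{2\pi i x}$. *)

theory Defs
  imports Complex_Main "Jordan_Normal_Form.Determinant"
begin

definition e :: "real \<Rightarrow> complex" where
  "e x = exp (2 * of_real pi * \<i> * of_real x)"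

end

theory Submission
  imports Defs "Jordan_Normal_Form.Char_Poly"
begin


lemma e_cis: "e x = cis (2 * pi * x)"
  unfolding e_def cis_conv_exp by (simp add: mult.commute mult.left_commute)

lemma e_add: "e (x + y) = e x * e y"
  unfolding e_cis by (simp add: cis_mult distrib_left)

lemma e_int: "e (of_int k) = 1"
  unfolding e_cis by (rule cis_multiple_2pi) simp

lemma e_nat: "e (of_nat k) = 1"
  using e_int[of "int k"] by simp

lemma e_nonzero: "e x \<noteq> 0"
  unfolding e_def by simp

lemma e_pow: "e x ^ k = e (real k * x)"
  unfolding e_cis DeMoivre by (simp add: mult.commute mult.left_commute)

lemma e_eq_1: "e x = 1 \<Longrightarrow> \<exists>k::int. x = of_int k"
proof -
  assume "e x = 1"
  hence "cos (2 * pi * x) = 1" unfolding e_cis by (metis cis.simps(1) one_complex.simps(1))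
  then obtain n :: int where "2 * pi * x = real_of_int n * 2 * pi" using cos_one_2pi_int by blast
  hence "x = of_int n" by simp
  thus ?thesis by blast
qed

lemma e_shift: "e (x + of_int k) = e x"
  by (simp add: e_add e_int)



definition ev :: "int poly \<Rightarrow> complex \<Rightarrow> complex" where
  "ev H z = poly (map_poly of_int H) z"

lemma ev_add[simp]: "ev (A + B) z = ev A z + ev B z"
  unfolding ev_def by (simp add: of_int_poly_hom.hom_add)
lemma ev_diff[simp]: "ev (A - B) z = ev A z - ev B z"
  unfolding ev_def by (simp add: of_int_poly_hom.hom_minus)
lemma ev_mult[simp]: "ev (A * B) z = ev A z * ev B z"
  unfolding ev_def by (simp add: of_int_poly_hom.hom_mult)
lemma ev_smult[simp]: "ev (smult c A) z = of_int c * ev A z"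
  unfolding ev_def by (simp add: map_poly_smult)
lemma ev_one[simp]: "ev 1 z = 1"
  unfolding ev_def by simp
lemma ev_zero[simp]: "ev 0 z = 0"
  unfolding ev_def by simp
lemma ev_pow[simp]: "ev (A ^ k) z = ev A z ^ k"
  by (induct k) auto
lemma ev_monom[simp]: "ev (monom c k) z = of_int c * z ^ k"
  unfolding ev_def by (simp add: poly_monom map_poly_monom)
lemma ev_const[simp]: "ev [:c:] z = of_int c"
  using ev_monom[of c 0 z] by (simp add: monom_0)
lemma ev_pcompose[simp]: "ev (pcompose A B) z = ev A (ev B z)"
  unfolding ev_def by (simp add: poly_pcompose of_int_hom.map_poly_pcompose)
lemma ev_sum[simp]: "ev (sum f S) z = (\<Sum>x\<in>S. ev (f x) z)"
  by (induct S rule: infinite_finite_induct) auto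



definition cg :: "int \<Rightarrow> int poly \<Rightarrow> int poly \<Rightarrow> bool" where
  "cg p A B \<longleftrightarrow> (\<exists>H. A - B = smult p H)"

lemma cg_refl: "cg p A A"
  unfolding cg_def by (intro exI[of _ 0]) simp

lemma cg_sym: "cg p A B \<Longrightarrow> cg p B A"
  unfolding cg_def by (metis minus_diff_eq smult_minus_right)

lemma cg_trans: "cg p A B \<Longrightarrow> cg p B C \<Longrightarrow> cg p A C"
  unfolding cg_def
proof (elim exE)
  fix H K assume "A - B = smult p H" "B - C = smult p K"
  hence "A - C = smult p (H + K)" by (simp add: smult_add_right algebra_simps)
  thus "\<exists>H. A - C = smult p H" by blast
qed

lemma cg_add: "cg p A B \<Longrightarrow> cg p C D \<Longrightarrow> cg p (A + C) (B + D)"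
  unfolding cg_def
proof (elim exE)
  fix H K assume "A - B = smult p H" "C - D = smult p K"
  hence "A + C - (B + D) = smult p (H + K)" by (simp add: smult_add_right algebra_simps)
  thus "\<exists>H. A + C - (B + D) = smult p H" by blast
qed

lemma cg_mult: "cg p A B \<Longrightarrow> cg p C D \<Longrightarrow> cg p (A * C) (B * D)"
  unfolding cg_def
proof (elim exE)
  fix H K assume h: "A - B = smult p H" "C - D = smult p K"
  have "A * C - B * D = (A - B) * C + B * (C - D)" by (simp add: algebra_simps)
  also have "\<dots> = smult p (H * C + B * K)" using h by (simp add: smult_add_right)
  finally show "\<exists>H. A * C - B * D = smult p H" by blast
qed

lemma cg_pow: "cg p A B \<Longrightarrow> cg p (A ^ k) (B ^ k)"
  by (induct k) (auto intro: cg_mult cg_refl)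

lemma freshman:
  fixes a b :: "'a :: comm_ring_1"
  assumes p: "prime p"
  shows "\<exists>H. (a + b) ^ p = a ^ p + b ^ p + of_nat p * H"
proof -
  have p2: "p \<ge> 2" using p by (simp add: prime_ge_2_nat)
  define H where "H = (\<Sum>k\<in>{1..p-1}. of_nat ((p choose k) div p) * a ^ k * b ^ (p - k) :: 'a)"
  have set: "{..p} = insert 0 (insert p {1..p-1})" using p2 by auto
  have "(a + b) ^ p = (\<Sum>k\<le>p. of_nat (p choose k) * a ^ k * b ^ (p - k))"
    by (rule binomial_ring)
  also have "\<dots> = b ^ p + (a ^ p + (\<Sum>k\<in>{1..p-1}. of_nat (p choose k) * a ^ k * b ^ (p - k)))"
    unfolding set using p2 by (subst sum.insert; (subst sum.insert)?; auto)
  also have "(\<Sum>k\<in>{1..p-1}. of_nat (p choose k) * a ^ k * b ^ (p - k)) = of_nat p * H"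
    unfolding H_def sum_distrib_left
  proof (rule sum.cong[OF refl])
    fix k assume k: "k \<in> {1..p-1}"
    have "p dvd p choose k" using k p2 p by (intro dvd_choose_prime) auto
    hence "p choose k = p * ((p choose k) div p)" by simp
    hence "(of_nat (p choose k) :: 'a) = of_nat p * of_nat ((p choose k) div p)"
      by (metis of_nat_mult)
    thus "of_nat (p choose k) * a ^ k * b ^ (p - k) = of_nat p * (of_nat ((p choose k) div p) * a ^ k * b ^ (p - k))"
      by (simp add: mult.assoc)
  qed
  finally show ?thesis by (auto simp: algebra_simps)
qed

lemma fermat_nat_aux:
  assumes p: "prime p"
  shows "int p dvd int c ^ p - int c"
proof (induct c)
  case 0 then show ?case using p by (simp add: prime_gt_0_nat power_0_left)
next
  case (Suc c)
  obtain H :: int where H: "(int c + 1) ^ p = int c ^ p + 1 ^ p + of_nat p * H"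
    using freshman[OF p, of "int c" 1] by blast
  have "int (Suc c) ^ p - int (Suc c) = (int c ^ p - int c) + of_nat p * H"
    using H by (simp add: ac_simps)
  thus ?case using Suc by (metis dvd_add dvd_triv_left of_nat_mult)
qed

lemma fermat_int:
  assumes p: "prime p"
  shows "int p dvd c ^ p - c"
proof -
  have pp: "int p > 0" using p by (simp add: prime_gt_0_nat)
  define r where "r = c mod int p"
  have r0: "r \<ge> 0" unfolding r_def using pp by simp
  have "int p dvd int (nat r) ^ p - int (nat r)" using fermat_nat_aux[OF p, of "nat r"] by simp
  hence "int p dvd r ^ p - r" using r0 by simp
  moreover have "(r ^ p) mod int p = (c ^ p) mod int p" unfolding r_def by (simp add: power_mod)
  moreover have "r mod int p = c mod int p" unfolding r_def by simp
  ultimately show ?thesis by (metis mod_eq_dvd_iff dvd_trans dvd_refl mod_0_imp_dvd)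
qed

lemma frobenius:
  assumes p: "prime p"
  shows "cg (int p) (g ^ p) (pcompose g (monom 1 p))"
proof (induct g)
  case 0
  then show ?case using p by (simp add: prime_gt_0_nat power_0_left cg_refl)
next
  case (pCons c g)
  have eq: "pCons c g = [:c:] + [:0,1:] * g" by simp
  obtain H where H: "([:c:] + [:0,1:] * g) ^ p = [:c:] ^ p + ([:0,1:] * g) ^ p + of_nat p * H"
    using freshman[OF p] by blast
  have ofn: "(of_nat p :: int poly) * H = smult (int p) H"
    by (simp add: of_nat_poly)
  have c1: "cg (int p) (([:c:] + [:0,1:] * g) ^ p) ([:c:] ^ p + ([:0,1:] * g) ^ p)"
    unfolding cg_def using H ofn by (intro exI[of _ H]) simp
  obtain k where k: "c ^ p - c = int p * k" using fermat_int[OF p, of c] by (auto elim: dvdE)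
  have c2: "cg (int p) ([:c:] ^ p) [:c:]"
    unfolding cg_def poly_const_pow using k by (intro exI[of _ "[:k:]"]) simp
  have c3: "cg (int p) (([:0,1:] * g) ^ p) (monom 1 p * pcompose g (monom 1 p))"
  proof -
    have "monom 1 p = ([:0,1:] ^ p :: int poly)" by (simp add: monom_altdef)
    thus ?thesis unfolding power_mult_distrib
      using cg_mult[OF cg_refl pCons(2)] by simp
  qed
  have "cg (int p) (pCons c g ^ p) ([:c:] + monom 1 p * pcompose g (monom 1 p))"
    unfolding eq by (rule cg_trans[OF c1 cg_add[OF c2 c3]])
  thus ?case by (simp add: pcompose_pCons)
qed



lemma smult_div_coeffs:
  fixes q :: "int poly"
  assumes "\<forall>i. a dvd coeff q i"
  shows "q = smult a (map_poly (\<lambda>x. x div a) q)"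
  using assms by (auto simp: poly_eq_iff coeff_map_poly)

lemma content1_dvd:
  fixes f G q :: "int poly"
  assumes c: "content f = 1" and a: "a \<noteq> 0" and eq: "smult a G = f * q"
  shows "f dvd G"
proof -
  have "content (smult a G) = content (f * q)" using eq by simp
  hence "normalize a * content G = content q" by (simp add: content_mult c content_smult)
  hence "a dvd content q" by (metis dvd_triv_left normalize_dvd_iff)
  hence "\<forall>i. a dvd coeff q i" using content_dvd_coeff dvd_trans by blast
  hence q: "q = smult a (map_poly (\<lambda>x. x div a) q)" by (rule smult_div_coeffs)
  have "smult a G = smult a (f * map_poly (\<lambda>x. x div a) q)"
    using eq q by (metis mult_smult_right)
  hence "G = f * map_poly (\<lambda>x. x div a) q" using a by (simp add: poly_eq_iff)
  thus ?thesis by (rule dvdI)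
qed

lemma P_facts:
  assumes "N \<ge> 1"
  shows "monom 1 N - (1::int poly) \<noteq> 0" "lead_coeff (monom 1 N - (1::int poly)) = 1"
    "ev (monom 1 N - 1) z = z ^ N - 1"
proof -
  let ?P = "monom 1 N - (1::int poly)"
  have c: "coeff ?P N = 1" using assms by (simp add: coeff_monom)
  have "degree ?P \<le> N" by (metis degree_diff_le degree_monom_le degree_1 le0)
  moreover have "N \<le> degree ?P" using c by (intro le_degree) simp
  ultimately have d: "degree ?P = N" by simp
  show "?P \<noteq> 0" using c by (metis coeff_0 zero_neq_one)
  show "lead_coeff ?P = 1" using c d by simp
  show "ev ?P z = z ^ N - 1" by simp
qed

lemma minpoly:
  assumes N: "N \<ge> 1" and z: "z ^ N = 1"
  shows "\<exists>f. monic f \<and> degree f \<ge> 1 \<and> ev f z = 0 \<and> (\<forall>G. ev G z = 0 \<longrightarrow> f dvd G)"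
proof -
  let ?P = "monom 1 N - (1::int poly)"
  define S where "S = {k. \<exists>R. R \<noteq> 0 \<and> degree R = k \<and> ev R z = 0}"
  have evP: "ev ?P z = 0" using P_facts(3)[OF N, of z] z by simp
  have "?P \<noteq> 0 \<and> degree ?P = degree ?P \<and> ev ?P z = 0" using P_facts(1)[OF N] evP by blast
  hence PS: "degree ?P \<in> S" unfolding S_def by blast
  define d where "d = (LEAST k. k \<in> S)"
  have "d \<in> S" unfolding d_def using PS by (rule LeastI)
  then obtain R where R: "R \<noteq> 0" "degree R = d" "ev R z = 0" unfolding S_def by auto
  have dmin: "\<And>R'. R' \<noteq> 0 \<Longrightarrow> ev R' z = 0 \<Longrightarrow> d \<le> degree R'"
    unfolding d_def by (rule Least_le) (auto simp: S_def)
  define f0 where "f0 = primitive_part R"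
  have cR: "content R \<noteq> 0" using R(1) by simp
  have Rf0: "R = smult (content R) f0" unfolding f0_def by simp
  have ev0: "ev f0 z = 0" using R(3) cR by (subst (asm) Rf0) simp
  have f0nz: "f0 \<noteq> 0" using R(1) Rf0 by auto
  have degf0: "degree f0 = d" unfolding f0_def using R by simp
  have cf0: "content f0 = 1" unfolding f0_def using R(1) by simp
  have dvd0: "f0 dvd G" if G: "ev G z = 0" for G
  proof -
    obtain a q where aq: "a \<noteq> 0" "smult a G = f0 * q + pseudo_mod G f0"
      using pseudo_mod(1)[OF f0nz] by blast
    have r: "pseudo_mod G f0 = 0 \<or> degree (pseudo_mod G f0) < degree f0"
      using pseudo_mod(2)[OF f0nz] by blast
    have "ev (pseudo_mod G f0) z = ev (smult a G) z - ev (f0 * q) z"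
      using aq(2) by simp
    hence evr: "ev (pseudo_mod G f0) z = 0" using G ev0 by simp
    have "pseudo_mod G f0 = 0"
    proof (rule ccontr)
      assume "pseudo_mod G f0 \<noteq> 0"
      with dmin[OF this evr] r degf0 show False by simp
    qed
    with aq have "smult a G = f0 * q" by simp
    thus ?thesis by (rule content1_dvd[OF cf0 aq(1)])
  qed
  from dvd0[OF evP] obtain g0 where g0: "?P = f0 * g0" by blast
  have "lead_coeff f0 * lead_coeff g0 = 1" using P_facts(2)[OF N] g0 by (simp add: lead_coeff_mult)
  hence l: "lead_coeff f0 * lead_coeff f0 = 1" by (metis zmult_eq_1_iff)
  define f where "f = smult (lead_coeff f0) f0"
  have "monic f" unfolding f_def using l f0nz by simp
  moreover have "degree f \<ge> 1"
  proof (rule ccontr)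
    assume "\<not> degree f \<ge> 1"
    hence "degree f0 = 0" unfolding f_def using l f0nz by (auto split: if_splits)
    then obtain c where "f0 = [:c:]" by (metis degree_eq_zeroE)
    with ev0 f0nz show False by simp
  qed
  moreover have "ev f z = 0" unfolding f_def using ev0 by simp
  moreover have "f dvd G" if G0: "ev G z = 0" for G
  proof -
    obtain q where "G = f0 * q" using dvd0[OF G0] by blast
    hence "G = f * smult (lead_coeff f0) q" unfolding f_def using l
      by (simp add: mult_smult_right[symmetric] smult_smult del: mult_smult_right)
    thus ?thesis by (rule dvdI)
  qed
  ultimately show ?thesis by blast
qed



lemma one_minus_pow: "\<exists>E. (1 - y) ^ n = 1 + y * (E :: 'a :: comm_ring_1)"
proof (induct n)
  case 0 show ?case by (intro exI[of _ 0]) simp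
next
  case (Suc n)
  then obtain E where "(1 - y) ^ n = 1 + y * E" by blast
  hence "(1 - y) ^ Suc n = 1 + y * (E - 1 - y * E)" by (simp add: algebra_simps)
  thus ?case by blast
qed

lemma deriv_identity:
  assumes N: "N \<ge> 1"
  shows "[:0,1:] * pderiv (monom 1 N - 1) - smult (int N) (monom 1 N - 1) = ([:int N:] :: int poly)"
proof -
  have "[:0,1:] * monom (int N) (N - 1) = (monom (int N) N :: int poly)"
    using N by (cases N) (simp_all add: monom_Suc)
  thus ?thesis by (simp add: pderiv_monom pderiv_diff smult_diff_right smult_monom)
qed

lemma monic_no_inverse:
  fixes f H W :: "int poly"
  assumes mon: "monic f" and deg: "degree f \<ge> 1" and p: "p \<ge> 2" and eq: "f * H = 1 + smult p W"
  shows False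
proof -
  define Hr where "Hr = map_poly (\<lambda>x. x mod p) H"
  define H2 where "H2 = map_poly (\<lambda>x. x div p) H"
  have HH: "H = Hr + smult p H2" by (auto simp: poly_eq_iff coeff_map_poly Hr_def H2_def)
  have eq2: "f * Hr = 1 + smult p (W - f * H2)"
    using eq unfolding HH by (simp add: algebra_simps smult_diff_right)
  show False
  proof (cases "Hr = 0")
    case True
    hence "coeff (1 + smult p (W - f * H2)) 0 = 0" using eq2 by simp
    hence "1 + p * coeff (W - f * H2) 0 = 0" by simp
    hence "p dvd 1" by (metis add.commute add_eq_0_iff dvd_minus_iff dvd_triv_left)
    thus False using p by simp
  next
    case False
    let ?d = "degree f + degree Hr"
    have "coeff (f * Hr) ?d = lead_coeff Hr" using mon by (simp add: coeff_mult_degree_sum)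
    moreover have "coeff (f * Hr) ?d = p * coeff (W - f * H2) ?d" using deg unfolding eq2 by simp
    ultimately have l: "lead_coeff Hr = p * coeff (W - f * H2) ?d" by simp
    have "lead_coeff Hr = coeff H (degree Hr) mod p" unfolding Hr_def by (simp add: coeff_map_poly)
    hence "0 \<le> lead_coeff Hr" "lead_coeff Hr < p" using p by auto
    moreover have "lead_coeff Hr \<noteq> 0" using False by simp
    ultimately have lp: "0 < lead_coeff Hr" "lead_coeff Hr < p" by auto
    define c where "c = coeff (W - f * H2) ?d"
    have lc: "lead_coeff Hr = p * c" using l unfolding c_def .
    have "0 < p * c" using lp lc by simp
    hence "c > 0" using p by (simp add: zero_less_mult_iff)
    hence "p * 1 \<le> p * c" using p by (intro mult_left_mono) auto
    hence "p \<le> p * c" by simp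
    thus False using lp lc by linarith
  qed
qed

lemma dedekind_prime:
  assumes N: "N \<ge> 1" and z: "z ^ N = 1" and p: "prime p" and pN: "\<not> p dvd N"
    and G: "ev G z = 0"
  shows "ev G (z ^ p) = 0"
proof -
  obtain f where f: "monic f" "degree f \<ge> 1" "ev f z = 0" "\<And>G. ev G z = 0 \<Longrightarrow> f dvd G"
    using minpoly[OF N z] by blast
  let ?P = "monom 1 N - (1::int poly)"
  have evP: "ev ?P w = w ^ N - 1" for w using P_facts(3)[OF N] by simp
  obtain g where g: "?P = f * g" using f(4)[of ?P] evP[of z] z by (auto elim: dvdE)
  have fzp: "ev f (z ^ p) = 0"
  proof (rule ccontr)
    assume nz: "ev f (z ^ p) \<noteq> 0"
    have "ev ?P (z ^ p) = 0" unfolding evP by (simp add: power_mult[symmetric] mult.commute power_mult z)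
    hence "ev g (z ^ p) = 0" using nz unfolding g by simp
    hence "ev (pcompose g (monom 1 p)) z = 0" by simp
    from f(4)[OF this] obtain k where k: "pcompose g (monom 1 p) = f * k" by (auto elim: dvdE)
    have "coprime p N" using p pN by (simp add: prime_imp_coprime)
    hence cop: "coprime (int p) (int N)" by simp
    obtain v u where vu: "v * int p + u * int N = 1"
      using cop by (metis bezout_int coprime_iff_gcd_eq_1)
    hence uv: "u * int N + v * int p = 1" by simp
    define A where "A = smult u ([:0,1:] * pderiv g - smult (int N) g)"
    define B where "B = smult u ([:0,1:] * pderiv f)"
    have "f * A + g * B = smult u ([:0,1:] * pderiv ?P - smult (int N) ?P)"
      unfolding A_def B_def g by (simp add: pderiv_mult algebra_simps smult_diff_right smult_add_right)
    also have "\<dots> = [:u * int N:]" unfolding deriv_identity[OF N] by simp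
    also have "\<dots> = 1 - smult (int p) [:v:]" using uv by (simp add: algebra_simps one_pCons)
    finally have fAgB: "f * A + g * B = 1 - smult (int p) [:v:]" .
    have "g * B - (1 - f * A) = (f * A + g * B) - 1" by (simp add: algebra_simps)
    also have "\<dots> = smult (int p) (- [:v:])" unfolding fAgB by simp
    finally have "cg (int p) (g * B) (1 - f * A)" unfolding cg_def by blast
    hence c1: "cg (int p) ((g * B) ^ p) ((1 - f * A) ^ p)" by (rule cg_pow)
    obtain E where E: "(1 - f * A) ^ p = 1 + (f * A) * E" using one_minus_pow by blast
    have c2: "cg (int p) ((g * B) ^ p) (f * (k * B ^ p))"
      unfolding power_mult_distrib using cg_mult[OF frobenius[OF p, of g] cg_refl[of _ "B ^ p"]]
      unfolding k by (simp add: mult.assoc)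
    have "cg (int p) (f * (k * B ^ p)) (1 + (f * A) * E)"
      using cg_trans[OF cg_sym[OF c2] c1] E by simp
    then obtain W where W: "f * (k * B ^ p) - (1 + (f * A) * E) = smult (int p) W"
      unfolding cg_def by blast
    have "f * (k * B ^ p - A * E) = 1 + smult (int p) W" using W by (simp add: algebra_simps)
    moreover have "int p \<ge> 2" using p by (simp add: prime_ge_2_nat)
    ultimately show False using monic_no_inverse[OF f(1) f(2)] by blast
  qed
  obtain k where "G = f * k" using f(4)[OF G] by (auto elim: dvdE)
  thus ?thesis using fzp by simp
qed

lemma dedekind:
  assumes N: "N \<ge> 1" and z: "z ^ N = 1" and t: "t \<ge> 1" "gcd t N = 1"
    and G: "ev G z = 0"
  shows "ev G (z ^ t) = 0"
  using t
proof (induct t rule: less_induct)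
  case (less t)
  show ?case
  proof (cases "t = 1")
    case True thus ?thesis using G by simp
  next
    case False
    then obtain p where p: "prime p" "p dvd t" using prime_factor_nat by blast
    then obtain t' where tt: "t = p * t'" by (auto elim: dvdE)
    have p2: "p \<ge> 2" using p by (simp add: prime_ge_2_nat)
    have t'1: "t' \<ge> 1" using less(2) tt by (cases t') auto
    have t'lt: "t' < t" using tt p2 t'1 by simp
    have cop': "gcd t' N = 1" using less(3) tt by (metis coprime_iff_gcd_eq_1 coprime_mult_left_iff)
    have IH: "ev G (z ^ t') = 0" using less(1)[OF t'lt t'1 cop'] .
    have z': "(z ^ t') ^ N = 1" by (metis power_mult mult.commute power_one z)
    have pN: "\<not> p dvd N"
    proof
      assume "p dvd N"
      with p(2) have "p dvd gcd t N" by simp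
      with less(3) p(1) show False by simp
    qed
    have "ev G ((z ^ t') ^ p) = 0" by (rule dedekind_prime[OF N z' p(1) pN IH])
    moreover have "z ^ t = (z ^ t') ^ p" unfolding tt by (subst mult.commute) (rule power_mult)
    ultimately show ?thesis by simp
  qed
qed



definition cyc :: "nat \<Rightarrow> complex set" where
  "cyc M = {w. \<exists>H. w = ev H (e (1 / real M))}"

lemma cyc_ev: "ev H (e (1 / real M)) \<in> cyc M" unfolding cyc_def by blast

lemma cycE: assumes "w \<in> cyc M" obtains H where "w = ev H (e (1 / real M))"
  using assms unfolding cyc_def by blast

lemma cyc_add: "a \<in> cyc M \<Longrightarrow> b \<in> cyc M \<Longrightarrow> a + b \<in> cyc M"
proof -
  assume "a \<in> cyc M" "b \<in> cyc M"
  then obtain A B where "a = ev A (e (1 / real M))" "b = ev B (e (1 / real M))" by (metis cycE)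
  hence "a + b = ev (A + B) (e (1 / real M))" by simp
  thus ?thesis using cyc_ev by metis
qed

lemma cyc_mult: "a \<in> cyc M \<Longrightarrow> b \<in> cyc M \<Longrightarrow> a * b \<in> cyc M"
proof -
  assume "a \<in> cyc M" "b \<in> cyc M"
  then obtain A B where "a = ev A (e (1 / real M))" "b = ev B (e (1 / real M))" by (metis cycE)
  hence "a * b = ev (A * B) (e (1 / real M))" by simp
  thus ?thesis using cyc_ev by metis
qed

lemma cyc_of_int: "of_int c \<in> cyc M"
  using cyc_ev[of "[:c:]" M] by simp

lemma cyc_0: "0 \<in> cyc M" using cyc_of_int[of 0 M] by simp
lemma cyc_1: "1 \<in> cyc M" using cyc_of_int[of 1 M] by simp

lemma cyc_sum: "(\<And>x. x \<in> S \<Longrightarrow> f x \<in> cyc M) \<Longrightarrow> sum f S \<in> cyc M"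
  by (induct S rule: infinite_finite_induct) (auto intro: cyc_add cyc_0)

lemma cyc_prod: "(\<And>x. x \<in> S \<Longrightarrow> f x \<in> cyc M) \<Longrightarrow> prod f S \<in> cyc M"
  by (induct S rule: infinite_finite_induct) (auto intro: cyc_mult cyc_1)

lemma cyc_e_nat: "e (real k / real M) \<in> cyc M"
proof -
  have "ev (monom 1 k) (e (1 / real M)) = e (real k / real M)"
    by (simp add: e_pow)
  thus ?thesis using cyc_ev by metis
qed

lemma e_mod_int:
  assumes M: "M \<ge> 1"
  shows "e (real_of_int K / real M) = e (real_of_int (K mod int M) / real M)"
proof -
  have "real_of_int K = real_of_int (K mod int M + int M * (K div int M))" by simp
  also have "\<dots> = real_of_int (K mod int M) + real M * real_of_int (K div int M)"
    by (simp only: of_int_add of_int_mult of_int_of_nat_eq)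
  finally have h: "real_of_int K = real_of_int (K mod int M) + real M * real_of_int (K div int M)" .
  have "real_of_int K / real M = real_of_int (K mod int M) / real M + of_int (K div int M)"
    using M unfolding h by (simp add: field_simps)
  thus ?thesis by (simp add: e_shift)
qed

lemma e_mod_nat:
  assumes M: "M \<ge> 1"
  shows "e (real k / real M) = e (real (k mod M) / real M)"
proof -
  have i: "int k mod int M = int (k mod M)" by (simp add: zmod_int)
  show ?thesis using e_mod_int[OF M, of "int k"] unfolding i by simp
qed

lemma cyc_e_int:
  assumes M: "M \<ge> 1"
  shows "e (real_of_int K / real M) \<in> cyc M"
proof -
  have "K mod int M \<ge> 0" using M by simp
  hence h: "real_of_int (K mod int M) = real (nat (K mod int M))" by simp
  have "e (real_of_int K / real M) = e (real_of_int (K mod int M) / real M)" by (rule e_mod_int[OF M])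
  also have "\<dots> = e (real (nat (K mod int M)) / real M)" using h by (simp only:)
  finally show ?thesis using cyc_e_nat[of "nat (K mod int M)" M] by (simp only:)
qed

lemma cyc_e_frac:
  assumes MdR: "M = d * R" and M: "M \<ge> 1"
  shows "e (real_of_int K / real d) \<in> cyc M"
proof -
  have "d \<noteq> 0" "R \<noteq> 0" using MdR M by auto
  hence "real_of_int K / real d = real_of_int (K * int R) / real M"
    unfolding MdR by (simp add: field_simps)
  thus ?thesis using cyc_e_int[OF M] by metis
qed

lemma e_sum_roots:
  assumes q: "q \<ge> 1"
  shows "(\<Sum>c<q. e (real (c * d) / real q)) = (if q dvd d then of_nat q else 0)"
proof (cases "q dvd d")
  case True
  then obtain j where j: "d = q * j" by blast
  have "e (real (c * d) / real q) = 1" for c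
  proof -
    have "real (c * d) / real q = real (c * j)" using q unfolding j by (simp add: field_simps)
    thus ?thesis using e_nat[of "c * j"] by simp
  qed
  thus ?thesis using True by simp
next
  case False
  define w where "w = e (real d / real q)"
  have wc: "e (real (c * d) / real q) = w ^ c" for c
    unfolding w_def e_pow by (simp add: field_simps)
  have w1: "w \<noteq> 1"
  proof
    assume "w = 1"
    then obtain k :: int where k: "real d / real q = of_int k" unfolding w_def using e_eq_1 by blast
    hence "real d = real q * of_int k" using q by (simp add: field_simps)
    hence "int d = int q * k" by (metis of_int_eq_iff of_int_mult of_int_of_nat_eq)
    hence "int q dvd int d" by simp
    with False show False by simp
  qed
  have wq: "w ^ q = 1" unfolding w_def e_pow using q by (simp add: e_nat)
  have "(\<Sum>c<q. e (real (c * d) / real q)) = (\<Sum>c<q. w ^ c)" using wc by simp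
  also have "\<dots> = (w ^ q - 1) / (w - 1)" using w1 by (rule geometric_sum)
  also have "\<dots> = 0" using wq by simp
  finally show ?thesis using False by simp
qed



lemma e_0[simp]: "e 0 = 1" unfolding e_def by simp

lemma char_indep:
  assumes q: "prime q"
    and h: "\<forall>c\<in>{1..q-1}. (\<Sum>b\<in>{1..q-1}. y b * e (real (c * b) / real q)) = 0"
  shows "\<forall>b\<in>{1..q-1}. y b = 0"
proof -
  have q2: "q \<ge> 2" using q by (simp add: prime_ge_2_nat)
  define B where "B = {1..q-1}"
  define S where "S = (\<Sum>b\<in>B. y b)"
  have key: "of_nat q * y bs = S" if bs: "bs \<in> B" for bs
  proof -
    have set: "{..<q} = insert 0 {1..q-1}" using q2 by auto
    have "(\<Sum>c<q. e (real (c * (q - bs)) / real q) * (\<Sum>b\<in>B. y b * e (real (c * b) / real q)))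
        = (\<Sum>b\<in>B. y b * e 0)"
    proof -
      have "(\<Sum>c\<in>{1..q-1}. e (real (c * (q - bs)) / real q) * (\<Sum>b\<in>B. y b * e (real (c * b) / real q))) = 0"
        using h unfolding B_def by simp
      thus ?thesis unfolding set by (simp add: B_def)
    qed
    also have "\<dots> = S" unfolding S_def by (simp add: e_def)
    finally have eq1: "(\<Sum>c<q. e (real (c * (q - bs)) / real q) * (\<Sum>b\<in>B. y b * e (real (c * b) / real q))) = S" .
    have "(\<Sum>c<q. e (real (c * (q - bs)) / real q) * (\<Sum>b\<in>B. y b * e (real (c * b) / real q)))
        = (\<Sum>b\<in>B. y b * (\<Sum>c<q. e (real (c * (b + (q - bs))) / real q)))"
    proof -
      have "e (real (c * (q - bs)) / real q) * e (real (c * b) / real q) = e (real (c * (b + (q - bs))) / real q)" for c b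
        unfolding e_add[symmetric] by (simp add: add_divide_distrib algebra_simps)
      hence "(\<Sum>c<q. e (real (c * (q - bs)) / real q) * (\<Sum>b\<in>B. y b * e (real (c * b) / real q)))
          = (\<Sum>c<q. \<Sum>b\<in>B. y b * e (real (c * (b + (q - bs))) / real q))"
        by (simp add: sum_distrib_left algebra_simps)
      also have "\<dots> = (\<Sum>b\<in>B. \<Sum>c<q. y b * e (real (c * (b + (q - bs))) / real q))"
        by (rule sum.swap)
      finally show ?thesis by (simp add: sum_distrib_left)
    qed
    also have "\<dots> = (\<Sum>b\<in>B. y b * (if b = bs then of_nat q else 0))"
    proof (rule sum.cong[OF refl])
      fix b assume b: "b \<in> B"
      have "q dvd (b + (q - bs)) \<longleftrightarrow> b = bs"
      proof
        assume d: "q dvd (b + (q - bs))"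
        have "b + (q - bs) > 0" "b + (q - bs) < 2 * q" using b bs q2 unfolding B_def by auto
        note bnd = this
        obtain j where j: "b + (q - bs) = q * j" using d by (auto elim: dvdE)
        have "j \<noteq> 0" using j bnd by auto
        moreover have "j < 2"
        proof (rule ccontr)
          assume "\<not> j < 2"
          hence "q * 2 \<le> q * j" by simp
          with j bnd show False by simp
        qed
        ultimately have "j = 1" by simp
        thus "b = bs" using j b bs unfolding B_def by auto
      next
        assume "b = bs" thus "q dvd (b + (q - bs))" using bs unfolding B_def by auto
      qed
      thus "y b * (\<Sum>c<q. e (real (c * (b + (q - bs))) / real q)) = y b * (if b = bs then of_nat q else 0)"
        using e_sum_roots[of q "b + (q - bs)"] q2 by simp
    qed
    also have "\<dots> = (\<Sum>b\<in>B. if b = bs then y b * of_nat q else 0)"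
      by (rule sum.cong) auto
    also have "\<dots> = y bs * of_nat q" using bs unfolding B_def by (simp only: sum.delta finite_atLeastAtMost if_True)
    finally show ?thesis using eq1 by (simp add: mult.commute)
  qed
  have yb: "y b = S / of_nat q" if "b \<in> B" for b using key[OF that] q2 by (simp add: field_simps)
  have "S = (\<Sum>b\<in>B. y b)" unfolding S_def ..
  also have "\<dots> = (\<Sum>b\<in>B. S / of_nat q)" by (rule sum.cong[OF refl]) (rule yb)
  also have "\<dots> = of_nat (q - 1) * S / of_nat q" unfolding B_def by simp
  finally have "S * of_nat q = of_nat (q - 1) * S" using q2 by (simp add: field_simps)
  hence "S * (of_nat q - of_nat (q - 1)) = 0" by (simp add: algebra_simps)
  moreover have "(of_nat q :: complex) - of_nat (q - 1) = 1" using q2 by (simp add: of_nat_diff)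
  ultimately have "S = 0" using q2 by auto
  thus ?thesis using yb unfolding B_def by simp
qed

lemma crt2:
  fixes M q c :: nat
  assumes g: "gcd M q = 1" and M: "M \<ge> 1" and q: "q \<ge> 1"
  shows "\<exists>t\<ge>1. t mod M = 1 mod M \<and> t mod q = c mod q"
proof -
  have "gcd (int M) (int q) = 1" using g by (metis gcd_int_int_eq of_nat_1)
  then obtain u v where uv: "u * int M + v * int q = 1" by (metis bezout_int)
  define D where "D = ((int c - 1) * u) div int q"
  define j where "j = ((int c - 1) * u) mod int q"
  have j0: "j \<ge> 0" unfolding j_def using q by simp
  have jD: "j = (int c - 1) * u - int q * D" unfolding j_def D_def by (simp add: minus_div_mult_eq_mod[symmetric])
  define T where "T = 1 + int M * j"
  have T1: "T \<ge> 1" unfolding T_def using j0 by simp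
  have "T mod int M = 1 mod int M" unfolding T_def by simp
  have uM: "u * int M = 1 - v * int q" using uv by simp
  have "T - int c = (int c - 1) * (u * int M - 1) - int q * (int M * D)"
    unfolding T_def jD by (simp add: algebra_simps)
  also have "\<dots> = int q * (- (int c - 1) * v - int M * D)" unfolding uM by (simp add: algebra_simps)
  finally have "int q dvd T - int c" by simp
  hence Tq: "T mod int q = int c mod int q" by (simp add: mod_eq_dvd_iff)
  define t where "t = nat T"
  have tT: "int t = T" unfolding t_def using T1 by simp
  have a1: "int (t mod M) = int (1 mod M)" unfolding zmod_int tT using \<open>T mod int M = 1 mod int M\<close> by simp
  have a2: "int (t mod q) = int (c mod q)" unfolding zmod_int tT using Tq by simp
  have "t mod M = 1 mod M" using a1 by (simp only: of_nat_eq_iff)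
  moreover have "t mod q = c mod q" using a2 by (simp only: of_nat_eq_iff)
  moreover have "t \<ge> 1" using T1 tT by simp
  ultimately show ?thesis by blast
qed




lemma indep_L:
  assumes M: "M \<ge> 1" and q: "prime q" and qM: "\<not> q dvd M"
    and y: "\<forall>b\<in>{1..q-1}. y b \<in> cyc M"
    and s0: "(\<Sum>b\<in>{1..q-1}. y b * e (real b / real q)) = 0"
  shows "\<forall>b\<in>{1..q-1}. y b = 0"
proof -
  have q2: "q \<ge> 2" using q by (simp add: prime_ge_2_nat)
  have "\<forall>b\<in>{1..q-1}. \<exists>Hb. y b = ev Hb (e (1 / real M))" using y unfolding cyc_def by blast
  then obtain H where H: "\<forall>b\<in>{1..q-1}. y b = ev (H b) (e (1 / real M))" by (metis bchoice)
  define N where "N = M * q"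
  define z where "z = e (1 / real N)"
  have N1: "N \<ge> 1" unfolding N_def using M q2 by simp
  have zN: "z ^ N = 1" unfolding z_def e_pow using N1 e_nat[of 1] by simp
  define G where "G = (\<Sum>b\<in>{1..q-1}. pcompose (H b) (monom 1 q) * monom 1 (M * b))"
  have evG: "ev G w = (\<Sum>b\<in>{1..q-1}. ev (H b) (w ^ q) * w ^ (M * b))" for w
    unfolding G_def by simp
  have main: "ev G (z ^ t) = (\<Sum>b\<in>{1..q-1}. y b * e (real (c * b) / real q))"
    if t: "t mod M = 1 mod M" "t mod q = c mod q" for t c
  proof -
    have a: "(z ^ t) ^ q = e (1 / real M)"
    proof -
      have "(z ^ t) ^ q = e (real (t * q) * (1 / real N))" unfolding z_def power_mult[symmetric] e_pow by (simp add: mult.commute)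
      also have "\<dots> = e (real t / real M)" unfolding N_def using q2 by (simp add: field_simps)
      also have "\<dots> = e (real (t mod M) / real M)" by (rule e_mod_nat[OF M])
      also have "\<dots> = e (real (1 mod M) / real M)" unfolding t(1) ..
      also have "\<dots> = e (real 1 / real M)" by (rule e_mod_nat[OF M, symmetric])
      finally show ?thesis by simp
    qed
    have b: "(z ^ t) ^ (M * b) = e (real (c * b) / real q)" for b
    proof -
      have "(z ^ t) ^ (M * b) = e (real (t * (M * b)) * (1 / real N))" unfolding z_def power_mult[symmetric] e_pow by (simp add: mult.commute)
      also have "\<dots> = e (real (t * b) / real q)" unfolding N_def using M by (simp add: field_simps)
      also have "\<dots> = e (real ((t * b) mod q) / real q)" using q2 by (intro e_mod_nat) simp
      also have "(t * b) mod q = (c * b) mod q" using t(2) by (metis mod_mult_left_eq)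
      also have "e (real ((c * b) mod q) / real q) = e (real (c * b) / real q)"
        using q2 by (intro e_mod_nat[symmetric]) simp
      finally show ?thesis .
    qed
    show ?thesis unfolding evG a b using H by (intro sum.cong) auto
  qed
  have h: "\<forall>c\<in>{1..q-1}. (\<Sum>b\<in>{1..q-1}. y b * e (real (c * b) / real q)) = 0"
  proof
    fix c assume c: "c \<in> {1..q-1}"
    have "coprime q M" using q qM by (simp add: prime_imp_coprime)
    hence gMq: "gcd M q = 1" by (simp add: coprime_iff_gcd_eq_1 gcd.commute)
    obtain t where t: "t \<ge> 1" "t mod M = 1 mod M" "t mod q = c mod q"
      using crt2[OF gMq M] q2 by fastforce
    have G0: "ev G z = 0" using main[of 1 1] s0 by simp
    have gM: "gcd t M = 1"
    proof (cases "M = 1")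
      case True thus ?thesis by simp
    next
      case False
      hence "t mod M = 1" using t(2) M by simp
      moreover have "gcd t M dvd t mod M" by (simp add: dvd_mod)
      ultimately show ?thesis by simp
    qed
    have "\<not> q dvd t"
    proof
      assume "q dvd t"
      hence "c mod q = 0" using t(3) by simp
      hence "q dvd c" by (simp add: dvd_eq_mod_eq_0)
      moreover have "c > 0" using c by simp
      ultimately have "q \<le> c" by (rule dvd_imp_le)
      thus False using c q2 by auto
    qed
    hence "coprime q t" using q by (simp add: prime_imp_coprime)
    hence "coprime t q" by (simp add: coprime_commute)
    moreover have "coprime t M" using gM by (simp add: coprime_iff_gcd_eq_1)
    ultimately have "coprime t N" unfolding N_def by simp
    hence gN: "gcd t N = 1" by (simp add: coprime_iff_gcd_eq_1)
    have "ev G (z ^ t) = 0" by (rule dedekind[OF N1 zN t(1) gN G0])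
    thus "(\<Sum>b\<in>{1..q-1}. y b * e (real (c * b) / real q)) = 0" using main[OF t(2,3)] by simp
  qed
  from char_indep[OF q h] show ?thesis .
qed

lemma indep_gen:
  assumes M: "M \<ge> 1" and q: "prime q" and qM: "\<not> q dvd M"
    and fin: "finite I" and g: "\<forall>x\<in>I. g x \<in> {1..q-1}" and z: "\<forall>x\<in>I. z x \<in> cyc M"
    and s0: "(\<Sum>x\<in>I. z x * e (real (g x) / real q)) = 0"
  shows "\<forall>b\<in>{1..q-1}. (\<Sum>x\<in>{x\<in>I. g x = b}. z x) = 0"
proof -
  define y where "y b = (\<Sum>x\<in>{x\<in>I. g x = b}. z x)" for b
  have y: "\<forall>b\<in>{1..q-1}. y b \<in> cyc M" unfolding y_def using z by (auto intro!: cyc_sum)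
  have "(\<Sum>b\<in>{1..q-1}. y b * e (real b / real q))
      = (\<Sum>b\<in>{1..q-1}. \<Sum>x\<in>{x\<in>I. g x = b}. z x * e (real (g x) / real q))"
    unfolding y_def sum_distrib_right by (intro sum.cong refl) auto
  also have "\<dots> = (\<Sum>x\<in>I. z x * e (real (g x) / real q))"
    using fin g by (intro sum.group) auto
  finally have "(\<Sum>b\<in>{1..q-1}. y b * e (real b / real q)) = 0" using s0 by simp
  from indep_L[OF M q qM y this] show ?thesis unfolding y_def .
qed



lemma det_cyc:
  assumes B: "B \<in> carrier_mat k k" and ent: "\<forall>i<k. \<forall>j<k. B $$ (i, j) \<in> cyc M"
  shows "det B \<in> cyc M"
proof -
  have "det B = (\<Sum>p\<in>{p. p permutes {0..<k}}. signof p * (\<Prod>i = 0..<k. B $$ (i, p i)))"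
    by (rule det_def'[OF B])
  also have "\<dots> \<in> cyc M"
  proof (rule cyc_sum)
    fix p assume "p \<in> {p. p permutes {0..<k}}"
    hence p: "p permutes {0..<k}" by simp
    have "(\<Prod>i = 0..<k. B $$ (i, p i)) \<in> cyc M"
    proof (rule cyc_prod)
      fix i assume i: "i \<in> {0..<k}"
      hence "p i \<in> {0..<k}" using p by (simp add: permutes_in_image)
      thus "B $$ (i, p i) \<in> cyc M" using ent i by simp
    qed
    thus "signof p * (\<Prod>i = 0..<k. B $$ (i, p i)) \<in> cyc M" by (intro cyc_mult cyc_of_int)
  qed
  finally show ?thesis .
qed

lemma det_mat0: "det (mat 0 0 f) = (1 :: 'a :: comm_ring_1)"
  by (simp add: det_def permutes_empty)



lemma main_ind:
  fixes n m :: nat and q :: "nat \<Rightarrow> nat" and s :: "nat \<Rightarrow> nat \<Rightarrow> nat set"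
  shows "(\<forall>j<h. prime (q j)) \<Longrightarrow> inj_on q {..<h} \<Longrightarrow> (\<forall>j<h. \<not> q j dvd m * n) \<Longrightarrow>
    (\<forall>i<h. \<forall>j<h. s i j \<subseteq> {1..q j - 1}) \<Longrightarrow>
    (\<forall>j<h. \<forall>i1<h. \<forall>i2<h. i1 \<noteq> i2 \<longrightarrow> s i1 j \<inter> s i2 j = {}) \<Longrightarrow>
    (\<forall>i<h. s i i \<noteq> {}) \<Longrightarrow>
    det (mat h h (\<lambda>(i, j). \<Sum>a\<in>s i j. e (real (n * a) / real (m * q j)))) \<noteq> 0"
proof (induct h)
  case 0 show ?case by (simp add: det_mat0)
next
  case (Suc k)
  note qp = Suc.prems(1) and qinj = Suc.prems(2) and qnd = Suc.prems(3)
    and ssub = Suc.prems(4) and sdisj = Suc.prems(5) and sdiag = Suc.prems(6)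
  define S where "S i j = (\<Sum>a\<in>s i j. e (real (n * a) / real (m * q j)))" for i j
  define F where "F = (\<lambda>(i, j). S i j)"
  have Feq: "(\<lambda>(i, j). \<Sum>a\<in>s i j. e (real (n * a) / real (m * q j))) = F"
    unfolding F_def S_def ..
  define A where "A = mat (Suc k) (Suc k) F"
  have Acar: "A \<in> carrier_mat (Suc k) (Suc k)" unfolding A_def by simp
  have IH: "det (mat k k F) \<noteq> 0"
  proof -
    have "inj_on q {..<k}" using qinj by (rule inj_on_subset) auto
    hence "det (mat k k (\<lambda>(i, j). \<Sum>a\<in>s i j. e (real (n * a) / real (m * q j)))) \<noteq> 0"
      using qp qnd ssub sdisj sdiag by (intro Suc.hyps) auto
    thus ?thesis unfolding Feq .
  qed
  have "\<not> q 0 dvd m * n" using qnd by simp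
  hence "m * n \<noteq> 0" by (metis dvd_0_right)
  hence m1: "m \<ge> 1" and n1: "n \<ge> 1" by auto
  define qk where "qk = q k"
  have qkp: "prime qk" unfolding qk_def using qp by simp
  have qk2: "qk \<ge> 2" using qkp by (simp add: prime_ge_2_nat)
  have qkm: "\<not> qk dvd m" using qnd unfolding qk_def by (metis dvd_mult2 lessI)
  have qkn: "\<not> qk dvd n" using qnd unfolding qk_def by (metis dvd_mult lessI)
  define M' where "M' = m * (\<Prod>l<k. q l)"
  have prodpos: "(\<Prod>l<k. q l) > 0"
    by (rule prod_pos) (use qp in \<open>auto simp: prime_gt_0_nat\<close>)
  have "M' \<noteq> 0" unfolding M'_def using m1 prodpos by (simp only: mult_eq_0_iff) linarith
  hence M'1: "M' \<ge> 1" by simp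
  have qkM': "\<not> qk dvd M'"
  proof
    assume "qk dvd M'"
    hence "qk dvd m \<or> qk dvd (\<Prod>l<k. q l)" unfolding M'_def using qkp by (simp add: prime_dvd_mult_iff)
    thus False
    proof
      assume "qk dvd m" with qkm show False by simp
    next
      assume "qk dvd (\<Prod>l<k. q l)"
      then obtain l where l: "l < k" "qk dvd q l" using qkp by (auto simp: prime_dvd_prod_iff)
      hence "qk = q l" using qkp qp by (intro primes_dvd_imp_eq) auto
      hence "q k = q l" unfolding qk_def .
      hence "k = l" using qinj l(1) by (auto dest: inj_onD)
      with l show False by simp
    qed
  qed
  have entcyc: "S i j \<in> cyc M'" if j: "j < k" for i j
  proof -
    define R where "R = (\<Prod>l\<in>{..<k} - {j}. q l)"
    have "(\<Prod>l<k. q l) = q j * R" unfolding R_def using j by (intro prod.remove) auto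
    hence MR: "M' = (m * q j) * R" unfolding M'_def by simp
    show ?thesis unfolding S_def
    proof (rule cyc_sum)
      fix a
      have "e (real_of_int (int (n * a)) / real (m * q j)) \<in> cyc M'" by (rule cyc_e_frac[OF MR M'1])
      thus "e (real (n * a) / real (m * q j)) \<in> cyc M'" by simp
    qed
  qed
  have cof_cyc: "cofactor A i k \<in> cyc M'" if i: "i < Suc k" for i
  proof -
    have car: "mat_delete A i k \<in> carrier_mat k k" using mat_delete_carrier[OF Acar] by simp
    have "\<forall>i'<k. \<forall>j'<k. mat_delete A i k $$ (i', j') \<in> cyc M'"
    proof (intro allI impI)
      fix i' j' assume "i' < k" "j' < k"
      hence "mat_delete A i k $$ (i', j') = S (if i' < i then i' else Suc i') j'"
        unfolding mat_delete_def A_def F_def by simp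
      thus "mat_delete A i k $$ (i', j') \<in> cyc M'" using entcyc[OF \<open>j' < k\<close>] by simp
    qed
    from det_cyc[OF car this] have "det (mat_delete A i k) \<in> cyc M'" .
    moreover have "((- 1) ^ (i + k) :: complex) = of_int ((- 1) ^ (i + k))" by simp
    ultimately show ?thesis unfolding cofactor_def by (metis cyc_mult cyc_of_int)
  qed
  have delkk: "mat_delete A k k = mat k k F"
    by (rule eq_matI) (auto simp: mat_delete_def A_def)
  have Ck: "cofactor A k k = det (mat k k F)" unfolding cofactor_def delkk by simp
  have "coprime qk m" using qkp qkm by (simp add: prime_imp_coprime)
  hence "gcd (int m) (int qk) = 1" by (simp add: coprime_iff_gcd_eq_1 gcd.commute)
  then obtain \<alpha> \<beta> :: int where ab: "\<alpha> * int m + \<beta> * int qk = 1" by (metis bezout_int)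
  define bb where "bb a = nat ((int (n * a) * \<alpha>) mod int qk)" for a
  have edecomp: "e (real (n * a) / real (m * qk)) =
      e (real (bb a) / real qk) * e (real_of_int (int (n * a) * \<beta>) / real m)" for a
  proof -
    have h: "real_of_int \<alpha> * real m + real_of_int \<beta> * real qk = 1"
      using ab by (metis of_int_1 of_int_add of_int_mult of_int_of_nat_eq)
    have "real (n * a) / real (m * qk) = real (n * a) * (real_of_int \<alpha> * real m + real_of_int \<beta> * real qk) / real (m * qk)"
      unfolding h by simp
    also have "\<dots> = real_of_int (int (n * a) * \<alpha>) / real qk + real_of_int (int (n * a) * \<beta>) / real m"
      using m1 qk2 by (simp add: field_simps)
    finally have "e (real (n * a) / real (m * qk)) =
        e (real_of_int (int (n * a) * \<alpha>) / real qk) * e (real_of_int (int (n * a) * \<beta>) / real m)"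
      by (simp add: e_add)
    also have "e (real_of_int (int (n * a) * \<alpha>) / real qk) = e (real_of_int ((int (n * a) * \<alpha>) mod int qk) / real qk)"
      using qk2 by (intro e_mod_int) simp
    also have "real_of_int ((int (n * a) * \<alpha>) mod int qk) = real (bb a)"
      unfolding bb_def using qk2 by simp
    finally show ?thesis .
  qed
  have intqkp: "prime (int qk)" using qkp by simp
  have qka: "\<not> int qk dvd \<alpha>"
  proof
    assume "int qk dvd \<alpha>"
    hence "int qk dvd \<alpha> * int m + \<beta> * int qk" by simp
    hence "int qk dvd 1" unfolding ab .
    thus False using qk2 by simp
  qed
  have qkn': "\<not> int qk dvd int n" using qkn by simp
  have bbrange: "bb a \<in> {1..qk-1}" if a: "a \<in> {1..qk-1}" for a
  proof -
    have "(int (n * a) * \<alpha>) mod int qk \<noteq> 0"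
    proof
      assume "(int (n * a) * \<alpha>) mod int qk = 0"
      hence "int qk dvd int n * int a * \<alpha>" by (simp add: dvd_eq_mod_eq_0)
      hence "int qk dvd int n \<or> int qk dvd int a \<or> int qk dvd \<alpha>" using intqkp by (simp add: prime_dvd_mult_iff)
      moreover have "\<not> int qk dvd int a"
      proof
        assume "int qk dvd int a"
        hence "qk dvd a" by simp
        hence "qk \<le> a" using a by (intro dvd_imp_le) auto
        thus False using a by auto
      qed
      ultimately show False using qkn' qka by blast
    qed
    moreover have "(int (n * a) * \<alpha>) mod int qk \<ge> 0" "(int (n * a) * \<alpha>) mod int qk < int qk" using qk2 by simp_all
    ultimately show ?thesis unfolding bb_def by auto
  qed
  have bbinj: "a = a'" if a: "a \<in> {1..qk-1}" and a': "a' \<in> {1..qk-1}" and eq: "bb a = bb a'" for a a'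
  proof -
    have "(int (n * a) * \<alpha>) mod int qk = (int (n * a') * \<alpha>) mod int qk"
      using eq qk2 unfolding bb_def by (simp add: nat_eq_iff2)
    hence "int qk dvd int (n * a) * \<alpha> - int (n * a') * \<alpha>" by (simp add: mod_eq_dvd_iff)
    also have "int (n * a) * \<alpha> - int (n * a') * \<alpha> = int n * \<alpha> * (int a - int a')" by (simp add: algebra_simps)
    finally have "int qk dvd int n \<or> int qk dvd \<alpha> \<or> int qk dvd (int a - int a')"
      using intqkp by (simp add: prime_dvd_mult_iff)
    hence d: "int qk dvd (int a - int a')" using qkn' qka by blast
    show ?thesis
    proof (rule ccontr)
      assume "a \<noteq> a'"
      hence "int a - int a' \<noteq> 0" by simp
      from dvd_imp_le_int[OF this d] have "int qk \<le> \<bar>int a - int a'\<bar>" by simp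
      thus False using a a' by auto
    qed
  qed
  have finsk: "finite (s i k)" if "i < Suc k" for i
    using ssub that by (meson finite_atLeastAtMost finite_subset lessI)
  define I where "I = Sigma {..<Suc k} (\<lambda>i. s i k)"
  define z where "z x = e (real_of_int (int (n * snd x) * \<beta>) / real m) * cofactor A (fst x) k" for x
  define g where "g (x :: nat \<times> nat) = bb (snd x)" for x
  have finI: "finite I" unfolding I_def using finsk by auto
  have gI: "\<forall>x\<in>I. g x \<in> {1..qk-1}"
  proof
    fix x assume "x \<in> I"
    hence "snd x \<in> s (fst x) k" "fst x < Suc k" unfolding I_def by auto
    hence "snd x \<in> {1..qk-1}" using ssub unfolding qk_def by blast
    thus "g x \<in> {1..qk-1}" unfolding g_def by (rule bbrange)
  qed
  have zI: "\<forall>x\<in>I. z x \<in> cyc M'"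
  proof
    fix x assume "x \<in> I"
    hence "fst x < Suc k" unfolding I_def by auto
    moreover have "e (real_of_int (int (n * snd x) * \<beta>) / real m) \<in> cyc M'"
      by (rule cyc_e_frac[OF M'_def M'1])
    ultimately show "z x \<in> cyc M'" unfolding z_def by (intro cyc_mult cof_cyc)
  qed
  have detA: "det A = (\<Sum>x\<in>I. z x * e (real (g x) / real qk))"
  proof -
    have "det A = (\<Sum>i<Suc k. A $$ (i, k) * cofactor A i k)"
      by (rule laplace_expansion_column[OF Acar]) simp
    also have "\<dots> = (\<Sum>i<Suc k. \<Sum>a\<in>s i k. z (i, a) * e (real (g (i, a)) / real qk))"
    proof (rule sum.cong[OF refl])
      fix i assume "i \<in> {..<Suc k}"
      hence "A $$ (i, k) = S i k" unfolding A_def F_def by simp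
      hence "A $$ (i, k) * cofactor A i k = (\<Sum>a\<in>s i k. e (real (n * a) / real (m * qk)) * cofactor A i k)"
        unfolding S_def qk_def by (simp add: sum_distrib_right)
      also have "\<dots> = (\<Sum>a\<in>s i k. z (i, a) * e (real (g (i, a)) / real qk))"
        unfolding edecomp z_def g_def by (intro sum.cong refl) simp
      finally show "A $$ (i, k) * cofactor A i k = (\<Sum>a\<in>s i k. z (i, a) * e (real (g (i, a)) / real qk))" .
    qed
    also have "\<dots> = (\<Sum>(i, a)\<in>I. z (i, a) * e (real (g (i, a)) / real qk))"
      unfolding I_def using finsk by (intro sum.Sigma) auto
    finally show ?thesis by simp
  qed
  show ?case unfolding Feq A_def[symmetric]
  proof
    assume "det A = 0"
    hence s0: "(\<Sum>x\<in>I. z x * e (real (g x) / real qk)) = 0" using detA by simp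
    have res: "\<forall>b\<in>{1..qk-1}. (\<Sum>x\<in>{x\<in>I. g x = b}. z x) = 0"
      by (rule indep_gen[OF M'1 qkp qkM' finI gI zI s0])
    obtain a0 where a0: "a0 \<in> s k k" using sdiag by auto
    have a0r: "a0 \<in> {1..qk-1}" using a0 ssub unfolding qk_def by blast
    have "{x\<in>I. g x = bb a0} = {(k, a0)}"
    proof (intro equalityI subsetI)
      fix x assume "x \<in> {x\<in>I. g x = bb a0}"
      then obtain i a where x: "x = (i, a)" "i < Suc k" "a \<in> s i k" "bb a = bb a0"
        unfolding I_def g_def by auto
      have ar: "a \<in> {1..qk-1}" using x ssub unfolding qk_def by blast
      have "a = a0" by (rule bbinj[OF ar a0r x(4)])
      hence "a0 \<in> s i k \<inter> s k k" using x a0 by simp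
      hence "i = k" using sdisj x(2) by blast
      thus "x \<in> {(k, a0)}" using x \<open>a = a0\<close> by simp
    next
      fix x assume "x \<in> {(k, a0)}"
      thus "x \<in> {x\<in>I. g x = bb a0}" unfolding I_def g_def using a0 by auto
    qed
    note set = this
    have "(\<Sum>x\<in>{x\<in>I. g x = bb a0}. z x) = 0" using res bbrange[OF a0r] by blast
    hence "z (k, a0) = 0" unfolding set by simp
    hence "cofactor A k k = 0" unfolding z_def using e_nonzero by simp
    thus False using Ck IH by simp
  qed
qed


theorem lemma4p5:
  fixes h n m :: nat and q :: "nat \<Rightarrow> nat" and s :: "nat \<Rightarrow> nat \<Rightarrow> nat set"
  assumes q_prime: "\<forall>j<h. prime (q j)"
    and q_distinct: "inj_on q {..<h}"
    and q_ndvd: "\<forall>j<h. \<not> q j dvd m * n"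
    and s_sub: "\<forall>i<h. \<forall>j<h. s i j \<subseteq> {1..q j - 1}"
    and s_disj: "\<forall>j<h. \<forall>i1<h. \<forall>i2<h. i1 \<noteq> i2 \<longrightarrow> s i1 j \<inter> s i2 j = {}"
    and s_diag: "\<forall>i<h. s i i \<noteq> {}"
  shows "det (mat h h (\<lambda>(i, j). \<Sum>a\<in>s i j. e (real (n * a) / real (m * q j)))) \<noteq> 0"
    using main_ind[OF q_prime q_distinct q_ndvd s_sub s_disj s_diag] .

end
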